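(* Consider a sequential team with a classical information structure such that additionally $\sigma(\omega_0)\subset\sigma(y^1)$. Suppose $\prod_k(\mathbb{Y}^k\times\mathbb{U}^k)$ is compact, the loss $c(\omega_0,\mathbf{u})$ is lower semi-continuous, and each measurement kernel $p_n$ is weakly continuous, i.e., $\int f(y^n)p_n(dy^n|\omega_0,u^1,\dots,u^{n-1})$ is continuous in $(\omega_0,u^1,\dots,u^{n-1})$ for every continuous and bounded $f$. Then there exists an optimal team policy which is deterministic.
   Context: Sequential team: DMs act in order $1,\dots,N$; DM $n$ observes $y^n=\eta^n(\omega,u^1,\dots,u^{n-1})\in\mathbb{Y}^n$ and chooses $u^n=\gamma^n(y^n)\in\mathbb{U}^n$ with $\gamma^n$ measurable; all spaces are standard Borel; $\omega_0$ is the cost-relevant exogenous variable and the cost is $J(\underline{\gamma})=E[c(\omega_0,\mathbf{u})]$ with $c\ge0$ measurable. The kernel $p_n$ is defined by $p_n(y^n\in\cdot|\omega_0,u^1,\dots,u^{n-1})=P(\eta^n(\omega,u^1,\dots,u^{n-1})\in\cdot\,|\,\omega_0,u^1,\dots,u^{n-1})$. The information structure is classical if $y^i$ contains all information available to DM $k$ for every $k<i$. An optimal policy attains $\inf_{\underline{\gamma}}J(\underline{\gamma})$. *)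

theory Defs
  imports "HOL-Probability.Probability"
begin

definition lsc_on :: "'a::topological_space set \<Rightarrow> ('a \<Rightarrow> real) \<Rightarrow> bool" where
  "lsc_on S f \<longleftrightarrow> (\<forall>a. openin (top_of_set S) {x \<in> S. a < f x})"

text \<open>Decision makers are indexed 0,...,N-1 (DM n+1 of the paper is DM n here).
  A tuple of earlier actions (u^0,...,u^(n-1)) is an extensional function in PiE {..<n} U.\<close>
primrec acts :: "(nat \<Rightarrow> 'o \<Rightarrow> (nat \<Rightarrow> 'u) \<Rightarrow> 'y) \<Rightarrow> (nat \<Rightarrow> 'y \<Rightarrow> 'u) \<Rightarrow> 'o \<Rightarrow> nat \<Rightarrow> (nat \<Rightarrow> 'u)" where
  "acts eta gamma omega 0 = (\<lambda>k. undefined)"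
| "acts eta gamma omega (Suc n) =
     (acts eta gamma omega n)(n := gamma n (eta n omega (acts eta gamma omega n)))"

definition team_policies :: "nat \<Rightarrow> (nat \<Rightarrow> 'y::topological_space set) \<Rightarrow> (nat \<Rightarrow> 'u::topological_space set)
    \<Rightarrow> (nat \<Rightarrow> 'y \<Rightarrow> 'u) set" where
  "team_policies N Y U = {gamma. \<forall>n<N. gamma n \<in> measurable (restrict_space borel (Y n)) borel
                                          \<and> (\<forall>y\<in>Y n. gamma n y \<in> U n)}"

definition team_cost :: "'o measure \<Rightarrow> ('o \<Rightarrow> 'w) \<Rightarrow> (nat \<Rightarrow> 'o \<Rightarrow> (nat \<Rightarrow> 'u) \<Rightarrow> 'y)
    \<Rightarrow> ('w \<Rightarrow> (nat \<Rightarrow> 'u) \<Rightarrow> real) \<Rightarrow> nat \<Rightarrow> (nat \<Rightarrow> 'y \<Rightarrow> 'u) \<Rightarrow> ennreal" where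
  "team_cost M w0 eta c N gamma = (\<integral>\<^sup>+ omega. ennreal (c (w0 omega) (acts eta gamma omega N)) \<partial>M)"

end

theory Submission
  imports Defs
begin


lemma dense_seq_exists:
  obtains d :: "nat \<Rightarrow> 'x::polish_space" where "\<And>x e. e > 0 \<Longrightarrow> \<exists>m. dist (d m) x < e"
proof -
  obtain D :: "'x set" where D: "countable D" "D \<noteq> {}" "\<And>U. open U \<Longrightarrow> U \<noteq> {} \<Longrightarrow> \<exists>y \<in> D. y \<in> U"
    using countable_dense_exists by blast
  define d where "d = from_nat_into D"
  have "\<exists>m. dist (d m) x < e" if "e > 0" for x e
  proof -
    have "\<exists>y\<in>D. y \<in> ball x e" using D(3)[of "ball x e"] that by auto
    then obtain y where "y \<in> D" "y \<in> ball x e" by blast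
    then obtain m where "d m = y" unfolding d_def by (metis D(1) from_nat_into_surj)
    then show ?thesis using \<open>y \<in> ball x e\<close> by (auto simp: dist_commute)
  qed
  then show ?thesis using that by blast
qed

lemma factor_lemma:
  fixes t :: "'p \<Rightarrow> 'x::polish_space" and g :: "'p \<Rightarrow> 'z::topological_space"
  assumes H: "\<forall>B\<in>sets (borel::'x measure). \<exists>C\<in>sets (borel::'z measure). \<forall>p\<in>S. t p \<in> B \<longleftrightarrow> g p \<in> C"
  shows "\<exists>h \<in> borel_measurable borel. \<forall>p\<in>S. h (g p) = t p"
proof -
  obtain d :: "nat \<Rightarrow> 'x" where d: "\<And>x e. e > 0 \<Longrightarrow> \<exists>m. dist (d m) x < e"
    using dense_seq_exists by blast
  define CC where "CC k m = (SOME C. C \<in> sets (borel::'z measure) \<and> (\<forall>p\<in>S. t p \<in> ball (d m) ((1/2)^k) \<longleftrightarrow> g p \<in> C))" for k m :: nat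
  have CC: "CC k m \<in> sets borel \<and> (\<forall>p\<in>S. t p \<in> ball (d m) ((1/2)^k) \<longleftrightarrow> g p \<in> CC k m)" for k m
  proof -
    have "ball (d m) ((1/2)^k) \<in> sets (borel::'x measure)" by simp
    then have "\<exists>C. C \<in> sets (borel::'z measure) \<and> (\<forall>p\<in>S. t p \<in> ball (d m) ((1/2)^k) \<longleftrightarrow> g p \<in> C)"
      using H by blast
    then show ?thesis unfolding CC_def by (rule someI_ex)
  qed
  define hk where "hk k z = d (LEAST m. z \<in> CC k m)" for k z
  have hk_meas[measurable]: "hk k \<in> borel_measurable borel" for k
  proof -
    have [measurable]: "(\<lambda>z. LEAST m. z \<in> CC k m) \<in> measurable borel (count_space UNIV)"
    proof (rule measurable_Least)
      fix m show "(\<lambda>z. z \<in> CC k m) \<in> measurable borel (count_space UNIV)"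
        using CC[of k m] by (intro pred_sets2[where N=borel] measurable_ident) auto
    qed
    show ?thesis unfolding hk_def
      by (rule measurable_compose_countable[where f="\<lambda>m z. d m"]) auto
  qed
  have hk_close: "dist (hk k (g p)) (t p) < (1/2)^k" if "p \<in> S" for k p
  proof -
    obtain m where "dist (d m) (t p) < (1/2)^k" using d[of "(1/2)^k"] by auto
    then have "g p \<in> CC k m" using CC[of k m] that by (auto simp: dist_commute)
    then have "g p \<in> CC k (LEAST m. g p \<in> CC k m)" by (rule LeastI)
    then have "dist (d (LEAST m. g p \<in> CC k m)) (t p) < (1/2)^k" using CC that by auto
    then show ?thesis unfolding hk_def by (simp add: dist_commute)
  qed
  have conv: "(\<lambda>k. hk k (g p)) \<longlonglongrightarrow> t p" if "p \<in> S" for p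
  proof (rule tendsto_dist_iff[THEN iffD2])
    have "(\<lambda>k. (1/2::real)^k) \<longlonglongrightarrow> 0" by (rule LIMSEQ_realpow_zero) auto
    then show "(\<lambda>k. dist (hk k (g p)) (t p)) \<longlonglongrightarrow> 0"
      by (rule Lim_null_comparison[rotated]) (auto intro!: always_eventually less_imp_le hk_close that)
  qed
  define u' where "u' z = lim (\<lambda>i. if Cauchy (\<lambda>i. hk i z) then hk i z else d 0)" for z
  have "u' \<in> borel_measurable borel"
  proof (rule borel_measurable_LIMSEQ_metric)
    fix z
    have "convergent (\<lambda>i. if Cauchy (\<lambda>i. hk i z) then hk i z else d 0)"
      by (cases "Cauchy (\<lambda>i. hk i z)")
         (auto simp add: convergent_eq_Cauchy[symmetric] convergent_def)
    then show "(\<lambda>i. if Cauchy (\<lambda>i. hk i z) then hk i z else d 0) \<longlonglongrightarrow> u' z"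
      unfolding u'_def by (rule convergent_LIMSEQ_iff[THEN iffD1])
  qed measurable
  moreover have "u' (g p) = t p" if "p \<in> S" for p
  proof -
    have "Cauchy (\<lambda>i. hk i (g p))" using conv[OF that] by (rule LIMSEQ_imp_Cauchy)
    then show ?thesis unfolding u'_def using conv[OF that] by (simp add: limI)
  qed
  ultimately show ?thesis by blast
qed

lemma lsc_open:
  fixes f :: "'w::topological_space \<Rightarrow> 'k::topological_space \<Rightarrow> real"
  assumes "lsc_on (UNIV \<times> K) (\<lambda>(w, u). f w u)"
  obtains T where "open T" "\<And>w x. x \<in> K \<Longrightarrow> (w, x) \<in> T \<longleftrightarrow> a < f w x"
proof -
  have "openin (top_of_set (UNIV \<times> K)) {p \<in> UNIV \<times> K. a < (\<lambda>(w, u). f w u) p}"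
    using assms unfolding lsc_on_def by blast
  then obtain T where T: "open T" "{p \<in> UNIV \<times> K. a < (\<lambda>(w, u). f w u) p} = (UNIV \<times> K) \<inter> T"
    by (auto simp: openin_open)
  have "(w, x) \<in> T \<longleftrightarrow> a < f w x" if "x \<in> K" for w x
  proof -
    have "(w, x) \<in> {p \<in> UNIV \<times> K. a < (\<lambda>(w, u). f w u) p} \<longleftrightarrow> (w,x) \<in> (UNIV \<times> K) \<inter> T"
      using T(2) by simp
    then show ?thesis using that by auto
  qed
  then show ?thesis using that T(1) by blast
qed

lemma lsc_attain:
  fixes f :: "'w::topological_space \<Rightarrow> 'k::topological_space \<Rightarrow> real"
  assumes lsc: "lsc_on (UNIV \<times> K) (\<lambda>(w, u). f w u)"
    and G: "compact G" "G \<noteq> {}" "G \<subseteq> K"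
  shows "\<exists>x\<in>G. \<forall>y\<in>G. f w x \<le> f w y"
proof (rule ccontr)
  assume "\<not> ?thesis"
  then have nm: "\<forall>x\<in>G. \<exists>y\<in>G. f w y < f w x" by (auto simp: not_le)
  define T where "T a = (SOME T. open T \<and> (\<forall>w x. x \<in> K \<longrightarrow> ((w, x) \<in> T \<longleftrightarrow> a < f w x)))" for a
  have T: "open (T a) \<and> (\<forall>w x. x \<in> K \<longrightarrow> ((w, x) \<in> T a \<longleftrightarrow> a < f w x))" for a
  proof -
    obtain T' where "open T'" "\<And>w x. x \<in> K \<Longrightarrow> (w, x) \<in> T' \<longleftrightarrow> a < f w x"
      using lsc_open[OF lsc] by metis
    then have "\<exists>T. open T \<and> (\<forall>w x. x \<in> K \<longrightarrow> ((w, x) \<in> T \<longleftrightarrow> a < f w x))" by blast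
    then show ?thesis unfolding T_def by (rule someI_ex)
  qed
  define Op where "Op y = (\<lambda>z. (w, z)) -` T (f w y)" for y
  have "open (Op y)" for y
    unfolding Op_def by (rule open_vimage) (auto intro!: continuous_intros T[THEN conjunct1])
  moreover have "G \<subseteq> (\<Union>y\<in>G. Op y)"
  proof
    fix x assume "x \<in> G"
    then obtain y where "y \<in> G" "f w y < f w x" using nm by blast
    then show "x \<in> (\<Union>y\<in>G. Op y)" using T \<open>x \<in> G\<close> G(3) unfolding Op_def by blast
  qed
  ultimately obtain F where F: "F \<subseteq> G" "finite F" "G \<subseteq> (\<Union>y\<in>F. Op y)"
    using compactE_image[OF G(1)] by metis
  have "F \<noteq> {}" using F G(2) by auto
  have "Min (f w ` F) \<in> f w ` F" using F(2) \<open>F \<noteq> {}\<close> by (intro Min_in) auto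
  then obtain y0 where y0F: "y0 \<in> F" and y0m: "f w y0 = Min (f w ` F)" by auto
  have y0: "\<forall>y\<in>F. f w y0 \<le> f w y" using F(2) y0m by auto
  then obtain y where "y \<in> F" "y0 \<in> Op y" using F(3) F(1) y0F by blast
  then have "f w y < f w y0" using T F(1) G(3) y0F unfolding Op_def by blast
  then show False using y0 \<open>y \<in> F\<close> by force
qed

lemma lsc_min_eq:
  fixes f :: "'w::topological_space \<Rightarrow> 'k::topological_space \<Rightarrow> real"
  assumes lsc: "lsc_on (UNIV \<times> K) (\<lambda>(w, u). f w u)"
    and G: "compact G" "G \<noteq> {}" "G \<subseteq> K"
  obtains x where "x \<in> G" "\<forall>y\<in>G. f w x \<le> f w y" "Inf (f w ` G) = f w x"
proof -
  obtain x where "x \<in> G" "\<forall>y\<in>G. f w x \<le> f w y" using lsc_attain[OF assms] by blast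
  moreover then have "Inf (f w ` G) = f w x" by (intro cInf_eq_minimum) auto
  ultimately show ?thesis using that by blast
qed

lemma lsc_min_meas:
  fixes f :: "'w::topological_space \<Rightarrow> 'k::topological_space \<Rightarrow> real"
  assumes lsc: "lsc_on (UNIV \<times> K) (\<lambda>(w, u). f w u)"
    and G: "compact G" "G \<noteq> {}" "G \<subseteq> K"
  shows "(\<lambda>w. Inf (f w ` G)) \<in> borel_measurable borel"
proof -
  have "open {w. a < Inf (f w ` G)}" for a
  proof (subst open_subopen, intro ballI)
    fix w0 assume "w0 \<in> {w. a < Inf (f w ` G)}"
    then have a: "a < Inf (f w0 ` G)" by simp
    obtain T where T: "open T" "\<And>w x. x \<in> K \<Longrightarrow> (w, x) \<in> T \<longleftrightarrow> a < f w x"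
      using lsc_open[OF lsc] by metis
    obtain x0 where x0: "x0 \<in> G" "\<forall>y\<in>G. f w0 x0 \<le> f w0 y" "Inf (f w0 ` G) = f w0 x0"
      using lsc_min_eq[OF lsc G] by metis
    have "{w0} \<times> G \<subseteq> T"
    proof
      fix p assume "p \<in> {w0} \<times> G"
      then obtain x where p: "p = (w0, x)" "x \<in> G" by auto
      then have "a < f w0 x" using a x0 by force
      then show "p \<in> T" using T p G(3) by auto
    qed
    then obtain X0 where X0: "w0 \<in> X0" "open X0" "X0 \<times> G \<subseteq> T"
      using Elementary_Topology.tube_lemma[OF G(1) T(1)] by blast
    have "X0 \<subseteq> {w. a < Inf (f w ` G)}"
    proof
      fix w assume "w \<in> X0"
      obtain x where x: "x \<in> G" "Inf (f w ` G) = f w x" using lsc_min_eq[OF lsc G] by metis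
      then have "(w, x) \<in> T" using X0 \<open>w \<in> X0\<close> by auto
      then show "w \<in> {w. a < Inf (f w ` G)}" using T(2) x G(3) by auto
    qed
    then show "\<exists>T. open T \<and> w0 \<in> T \<and> T \<subseteq> {w. a < Inf (f w ` G)}" using X0 by blast
  qed
  then show ?thesis by (auto simp: borel_measurable_iff_greater)
qed

lemma lsc_E_borel:
  fixes f :: "'w::topological_space \<Rightarrow> 'k::topological_space \<Rightarrow> real"
  assumes lsc: "lsc_on (UNIV \<times> K) (\<lambda>(w, u). f w u)"
    and K: "compact K" "K \<noteq> {}" and G: "compact G" "G \<subseteq> K"
  shows "{w. \<exists>x\<in>G. \<forall>y\<in>K. f w x \<le> f w y} \<in> sets borel"
proof (cases "G = {}")
  case True then show ?thesis by simp
next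
  case False
  have eq: "{w. \<exists>x\<in>G. \<forall>y\<in>K. f w x \<le> f w y} = {w. Inf (f w ` G) \<le> Inf (f w ` K)}"
  proof (intro set_eqI iffI; simp)
    fix w assume "\<exists>x\<in>G. \<forall>y\<in>K. f w x \<le> f w y"
    then obtain x where x: "x \<in> G" "\<forall>y\<in>K. f w x \<le> f w y" by blast
    obtain xG where xG: "xG \<in> G" "\<forall>y\<in>G. f w xG \<le> f w y" "Inf (f w ` G) = f w xG"
      using lsc_min_eq[OF lsc G(1) False G(2)] by metis
    obtain xK where xK: "xK \<in> K" "\<forall>y\<in>K. f w xK \<le> f w y" "Inf (f w ` K) = f w xK"
      using lsc_min_eq[OF lsc K(1) K(2) order_refl] by metis
    show "Inf (f w ` G) \<le> Inf (f w ` K)" using x xG xK by force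
  next
    fix w assume le: "Inf (f w ` G) \<le> Inf (f w ` K)"
    obtain xG where xG: "xG \<in> G" "\<forall>y\<in>G. f w xG \<le> f w y" "Inf (f w ` G) = f w xG"
      using lsc_min_eq[OF lsc G(1) False G(2)] by metis
    obtain xK where xK: "xK \<in> K" "\<forall>y\<in>K. f w xK \<le> f w y" "Inf (f w ` K) = f w xK"
      using lsc_min_eq[OF lsc K(1) K(2) order_refl] by metis
    show "\<exists>x\<in>G. \<forall>y\<in>K. f w x \<le> f w y" using le xG xK by force
  qed
  have [measurable]: "(\<lambda>w. Inf (f w ` G)) \<in> borel_measurable borel"
    using lsc_min_meas[OF lsc G(1) False G(2)] .
  have [measurable]: "(\<lambda>w. Inf (f w ` K)) \<in> borel_measurable borel"
    using lsc_min_meas[OF lsc K(1) K(2) order_refl] .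
  show ?thesis unfolding eq by measurable
qed

lemma compact_dense_seq:
  fixes K :: "'k::metric_space set"
  assumes "compact K" "K \<noteq> {}"
  obtains q :: "nat \<Rightarrow> 'k" where "\<And>m. q m \<in> K" "\<And>x e. x \<in> K \<Longrightarrow> e > 0 \<Longrightarrow> \<exists>m. dist (q m) x < e"
proof -
  have "\<exists>F. F \<subseteq> K \<and> finite F \<and> K \<subseteq> (\<Union>x\<in>F. ball x (1 / Suc k))" for k :: nat
  proof -
    have cov: "K \<subseteq> (\<Union>x\<in>K. ball x (1 / Suc k))"
    proof
      fix x assume "x \<in> K" then show "x \<in> (\<Union>x\<in>K. ball x (1 / Suc k))" by (intro UN_I[of x]) auto
    qed
    obtain F where "F \<subseteq> K" "finite F" "K \<subseteq> (\<Union>x\<in>F. ball x (1 / Suc k))"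
      by (rule compactE_image[OF assms(1) _ cov]) auto
    then show ?thesis by blast
  qed
  then obtain F where F: "\<And>k. F k \<subseteq> K \<and> finite (F k) \<and> K \<subseteq> (\<Union>x\<in>F k. ball x (1 / Suc k))"
    by metis
  define D where "D = (\<Union>k. F k)"
  have cD: "countable D" unfolding D_def using F by (simp add: countable_finite)
  have DK: "D \<subseteq> K" unfolding D_def using F by auto
  have dense: "\<exists>y\<in>D. dist y x < e" if xK: "x \<in> K" and ep: "e > 0" for x e
  proof -
    obtain k :: nat where k: "1 / real (Suc k) < e" using nat_approx_posE[OF ep] by blast
    have "x \<in> (\<Union>x\<in>F k. ball x (1 / Suc k))" using F[of k] xK by blast
    then obtain y where "y \<in> F k" "dist y x < 1 / Suc k" by auto
    then have "y \<in> D" "dist y x < e" using k unfolding D_def by auto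
    then show ?thesis by blast
  qed
  have "D \<noteq> {}"
  proof -
    obtain x where "x \<in> K" using assms(2) by blast
    then show ?thesis using dense[of x 1] by auto
  qed
  define q where "q = from_nat_into D"
  have "q m \<in> K" for m unfolding q_def using from_nat_into[OF \<open>D \<noteq> {}\<close>] DK by auto
  moreover have "\<exists>m. dist (q m) x < e" if xK: "x \<in> K" and ep: "e > 0" for x e
  proof -
    obtain y where y: "y \<in> D" "dist y x < e" using dense[OF xK ep] by blast
    obtain m where "from_nat_into D m = y" using from_nat_into_surj[OF cD y(1)] by blast
    then show ?thesis using y unfolding q_def by blast
  qed
  ultimately show ?thesis using that by blast
qed

primrec sel_idx :: "(nat list \<Rightarrow> nat \<Rightarrow> 'w \<Rightarrow> bool) \<Rightarrow> nat \<Rightarrow> 'w \<Rightarrow> nat list" where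
  "sel_idx P 0 w = []"
| "sel_idx P (Suc k) w = sel_idx P k w @ [LEAST m. P (sel_idx P k w) m w]"

lemma sel_idx_length[simp]: "length (sel_idx P k w) = k"
  by (induction k) auto

lemma sel_idx_prefix: "\<exists>t. sel_idx P (k + j) w = sel_idx P k w @ t"
  by (induction j) auto

lemma sel_idx_nth: "i < k \<Longrightarrow> sel_idx P k w ! i = sel_idx P (Suc i) w ! i"
proof -
  assume "i < k"
  then obtain j where "k = Suc i + j" using less_iff_Suc_add by auto
  then obtain t where "sel_idx P k w = sel_idx P (Suc i) w @ t" using sel_idx_prefix[of P "Suc i" j w] by auto
  then show ?thesis by (simp add: nth_append)
qed




lemma lsc_select:
  fixes f :: "'w::topological_space \<Rightarrow> 'k::polish_space \<Rightarrow> real"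
  assumes lsc: "lsc_on (UNIV \<times> K) (\<lambda>(w, u). f w u)"
    and K: "compact K" "K \<noteq> {}"
  shows "\<exists>s \<in> borel_measurable borel. \<forall>w. s w \<in> K \<and> (\<forall>y\<in>K. f w (s w) \<le> f w y)"
proof -
  have "\<exists>q::nat\<Rightarrow>'k. (\<forall>m. q m \<in> K) \<and> (\<forall>x e. x \<in> K \<longrightarrow> e > 0 \<longrightarrow> (\<exists>m. dist (q m) x < e))"
    by (rule compact_dense_seq[OF K]) blast
  then obtain q :: "nat \<Rightarrow> 'k" where q1: "\<forall>m. q m \<in> K"
    and q2: "\<forall>x e. x \<in> K \<longrightarrow> e > 0 \<longrightarrow> (\<exists>m. dist (q m) x < e)" by blast
  have q: "\<And>m. q m \<in> K" "\<And>x e. x \<in> K \<Longrightarrow> e > 0 \<Longrightarrow> \<exists>m. dist (q m) x < e"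
    using q1 q2 by auto
  define r where "r j = (1/2::real)^j" for j :: nat
  define B where "B l = K \<inter> (\<Inter>j<length l. cball (q (l!j)) (r j))" for l
  define E where "E l = {w. \<exists>x\<in>B l. \<forall>y\<in>K. f w x \<le> f w y}" for l
  define P where "P l m w = (w \<in> E (l @ [m]))" for l m w
  define idx where "idx = sel_idx P"
  have Bc: "compact (B l)" for l unfolding B_def by (intro compact_Int_closed K(1) closed_INT) auto
  have BK: "B l \<subseteq> K" for l unfolding B_def by auto
  have Eb: "E l \<in> sets borel" for l using lsc_E_borel[OF lsc K Bc BK] unfolding E_def .
  have B_snoc: "B (l @ [m]) = B l \<inter> cball (q m) (r (length l))" for l m
  proof -
    have "(\<Inter>j<length (l @ [m]). cball (q ((l @ [m])!j)) (r j))
        = (\<Inter>j<length l. cball (q (l!j)) (r j)) \<inter> cball (q m) (r (length l))"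
      by (auto simp: lessThan_Suc nth_append)
    then show ?thesis unfolding B_def by auto
  qed
  have B_nil: "B [] = K" unfolding B_def by simp
  have inv: "w \<in> E (idx k w)" for k w
  proof (induction k)
    case 0
    obtain x where "x \<in> K" "\<forall>y\<in>K. f w x \<le> f w y" using lsc_attain[OF lsc K order_refl] by blast
    then show ?case unfolding idx_def E_def using B_nil by auto
  next
    case (Suc k)
    then obtain x where x: "x \<in> B (idx k w)" "\<forall>y\<in>K. f w x \<le> f w y" unfolding E_def by blast
    have "r k > 0" unfolding r_def by simp
    then obtain m where "dist (q m) x < r k" using q(2)[of x "r k"] x(1) BK by blast
    then have "x \<in> B (idx k w @ [m])" using x(1) unfolding B_snoc by (simp add: idx_def)
    then have "P (idx k w) m w" unfolding P_def E_def using x(2) by blast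
    then have "P (idx k w) (LEAST m. P (idx k w) m w) w" by (rule LeastI)
    then show ?case unfolding P_def idx_def by simp
  qed
  define xk where "xk k w = q (idx (Suc k) w ! k)" for k w
  have Bsub: "B (idx n w) \<subseteq> cball (xk i w) (r i)" if "i < n" for i n w
  proof -
    have "B (idx n w) \<subseteq> cball (q (idx n w ! i)) (r i)" unfolding B_def using that by (auto simp: idx_def)
    then show ?thesis unfolding xk_def idx_def using sel_idx_nth[OF that, of P w] by (simp del: sel_idx.simps)
  qed
  have rmono: "r n \<le> r i" if "i \<le> n" for i n unfolding r_def using that by (simp add: power_decreasing)
  define s where "s w = lim (\<lambda>k. xk k w)" for w
  have main: "(\<lambda>k. xk k w) \<longlonglongrightarrow> s w \<and> s w \<in> K \<and> (\<forall>y\<in>K. f w (s w) \<le> f w y)" for w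
  proof -
    have "\<forall>k. \<exists>z. z \<in> B (idx (Suc k) w) \<and> (\<forall>y\<in>K. f w z \<le> f w y)"
      using inv[of w] unfolding E_def by blast
    then obtain z where z0: "\<forall>k. z k \<in> B (idx (Suc k) w) \<and> (\<forall>y\<in>K. f w (z k) \<le> f w y)"
      by (rule choice[THEN exE])
    have z: "\<And>k. z k \<in> B (idx (Suc k) w)" "\<And>k y. y \<in> K \<Longrightarrow> f w (z k) \<le> f w y"
      using z0 by blast+
    have dz: "dist (xk i w) (z n) \<le> r i" if "i \<le> n" for i n
      using Bsub[of i "Suc n" w] z(1)[of n] that by (auto simp: dist_commute)
    have "Cauchy (\<lambda>k. xk k w)"
    proof (rule metric_CauchyI)
      fix e :: real assume "e > 0"
      then obtain M where M: "(1/2::real)^M < e/4" using real_arch_pow_inv[of "e/4" "1/2"] by auto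
      show "\<exists>M. \<forall>m\<ge>M. \<forall>n\<ge>M. dist (xk m w) (xk n w) < e"
      proof (intro exI allI impI)
        fix m n assume mn: "M \<le> m" "M \<le> n"
        have "dist (xk m w) (xk M w) \<le> dist (xk m w) (z m) + dist (xk M w) (z m)"
          by (rule dist_triangle2)
        also have "\<dots> \<le> r M + r M" using dz[of m m] dz[of M m] rmono[OF mn(1)] mn by auto
        finally have 1: "dist (xk m w) (xk M w) \<le> 2 * r M" by simp
        have "dist (xk n w) (xk M w) \<le> dist (xk n w) (z n) + dist (xk M w) (z n)"
          by (rule dist_triangle2)
        also have "\<dots> \<le> r M + r M" using dz[of n n] dz[of M n] rmono[OF mn(2)] mn by auto
        finally have 2: "dist (xk n w) (xk M w) \<le> 2 * r M" by simp
        have "dist (xk m w) (xk n w) \<le> dist (xk m w) (xk M w) + dist (xk n w) (xk M w)"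
          by (rule dist_triangle2)
        also have "\<dots> \<le> 4 * r M" using 1 2 by simp
        also have "\<dots> < e" using M unfolding r_def by simp
        finally show "dist (xk m w) (xk n w) < e" .
      qed
    qed
    then have lim: "(\<lambda>k. xk k w) \<longlonglongrightarrow> s w" unfolding s_def
      using Cauchy_convergent convergent_LIMSEQ_iff by blast
    have r0: "r \<longlonglongrightarrow> 0" unfolding r_def by (rule LIMSEQ_realpow_zero) auto
    have "(\<lambda>k. dist (xk k w) (s w)) \<longlonglongrightarrow> 0" using lim by (rule tendsto_dist_iff[THEN iffD1])
    then have "(\<lambda>k. dist (xk k w) (s w) + r k) \<longlonglongrightarrow> 0 + 0" using r0 by (rule tendsto_add)
    then have "(\<lambda>k. dist (xk k w) (s w) + r k) \<longlonglongrightarrow> 0" by simp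
    then have "(\<lambda>k. dist (z k) (s w)) \<longlonglongrightarrow> 0"
    proof (rule Lim_null_comparison[rotated], intro always_eventually allI)
      fix k
      have "dist (z k) (s w) \<le> dist (xk k w) (z k) + dist (xk k w) (s w)" by (rule dist_triangle3)
      then show "norm (dist (z k) (s w)) \<le> dist (xk k w) (s w) + r k" using dz[of k k] by simp
    qed
    then have zlim: "z \<longlonglongrightarrow> s w" by (rule tendsto_dist_iff[THEN iffD2])
    have zK: "z k \<in> K" for k using z(1) BK by blast
    have sK: "s w \<in> K" using closed_sequentially[OF compact_imp_closed[OF K(1)] zK zlim] .
    have "f w (s w) \<le> f w y" if yK: "y \<in> K" for y
    proof (rule ccontr)
      assume "\<not> ?thesis"
      then have lt: "f w y < f w (s w)" by simp
      obtain T where T: "open T" "\<And>w' x. x \<in> K \<Longrightarrow> (w', x) \<in> T \<longleftrightarrow> f w y < f w' x"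
        using lsc_open[OF lsc] by metis
      have "(w, s w) \<in> T" using T(2) sK lt by blast
      moreover have "(\<lambda>k. (w, z k)) \<longlonglongrightarrow> (w, s w)" using zlim by (intro tendsto_Pair tendsto_const)
      ultimately have "eventually (\<lambda>k. (w, z k) \<in> T) sequentially"
        using T(1) by (simp add: topological_tendstoD)
      then obtain k where "(w, z k) \<in> T" unfolding eventually_sequentially by blast
      then have "f w y < f w (z k)" using T(2) zK by blast
      then show False using z(2)[OF yK, of k] by simp
    qed
    then show ?thesis using lim sK by blast
  qed
  have step: "(\<lambda>w. l @ [LEAST m. P l m w]) \<in> measurable borel (count_space UNIV)" for l
  proof -
    have pm: "(\<lambda>w. P l m w) \<in> measurable borel (count_space UNIV)" for m
    proof -
      have "(\<lambda>w. w \<in> E (l @ [m])) \<in> measurable borel (count_space UNIV)"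
        by (rule pred_sets2[OF Eb measurable_ident_sets]) (rule refl)
      then show ?thesis unfolding P_def .
    qed
    have "(\<lambda>w. LEAST m. P l m w) \<in> measurable borel (count_space UNIV)"
      by (rule measurable_Least[OF pm])
    moreover have "(\<lambda>n. l @ [n]) \<in> measurable (count_space UNIV) (count_space UNIV)"
      by simp
    ultimately show ?thesis by (rule measurable_compose)
  qed
  have idx_meas: "idx k \<in> measurable borel (count_space UNIV)" for k
  proof (induction k)
    case 0
    have "idx 0 = (\<lambda>w. [])" by (rule ext) (simp add: idx_def)
    then show ?case by simp
  next
    case (Suc k)
    have eq: "idx (Suc k) = (\<lambda>w. (\<lambda>l w. l @ [LEAST m. P l m w]) (idx k w) w)"
      by (rule ext) (simp add: idx_def)
    show ?case unfolding eq by (rule measurable_compose_countable[OF step Suc.IH])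
  qed
  have xk_meas: "xk k \<in> borel_measurable borel" for k
  proof -
    have "(\<lambda>l. q (l ! k)) \<in> measurable (count_space UNIV) borel" by simp
    then have "(\<lambda>w. q (idx (Suc k) w ! k)) \<in> borel_measurable borel"
      by (rule measurable_compose[OF idx_meas])
    then show ?thesis unfolding xk_def .
  qed
  have lims: "\<And>w. w \<in> space borel \<Longrightarrow> (\<lambda>i. xk i w) \<longlonglongrightarrow> s w"
    using main by blast
  have "s \<in> borel_measurable borel"
    by (rule borel_measurable_LIMSEQ_metric[OF xk_meas lims])
  moreover have "\<forall>w. s w \<in> K \<and> (\<forall>y\<in>K. f w (s w) \<le> f w y)" using main by blast
  ultimately show ?thesis by blast
qed



lemma compact_proj_lemmas:
  fixes Y :: "nat \<Rightarrow> 'y::topological_space set" and U :: "nat \<Rightarrow> 'u::topological_space set"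
  assumes cp: "compact (PiE {..<N} (\<lambda>k. Y k \<times> U k))"
    and ne: "\<And>k. k < N \<Longrightarrow> Y k \<noteq> {} \<and> U k \<noteq> {}"
  shows "compact (PiE {..<N} U)" and "\<And>n. n < N \<Longrightarrow> compact (U n)"
proof -
  define g where "g f = restrict (\<lambda>k. snd (f k)) {..<N}" for f :: "nat \<Rightarrow> 'y \<times> 'u"
  have "continuous_on UNIV g"
  proof (rule continuous_on_coordinatewise_then_product)
    fix i
    show "continuous_on UNIV (\<lambda>f. g f i)"
    proof (cases "i < N")
      case True
      then have eq: "(\<lambda>f. g f i) = (\<lambda>f. snd (f i))" unfolding g_def by auto
      have "continuous_on UNIV (\<lambda>f::nat\<Rightarrow>'y\<times>'u. snd (f i))"
        by (intro continuous_on_snd continuous_on_product_coordinates)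
      then show ?thesis unfolding eq .
    next
      case False
      then have eq: "(\<lambda>f. g f i) = (\<lambda>f. undefined)" unfolding g_def by auto
      show ?thesis unfolding eq by (rule continuous_on_const)
    qed
  qed
  moreover have "PiE {..<N} U = g ` PiE {..<N} (\<lambda>k. Y k \<times> U k)"
  proof (intro set_eqI iffI)
    fix u assume u: "u \<in> PiE {..<N} U"
    define f where "f = restrict (\<lambda>k. (SOME y. y \<in> Y k, u k)) {..<N}"
    have "f \<in> PiE {..<N} (\<lambda>k. Y k \<times> U k)"
      unfolding f_def using u ne by (auto simp: some_in_eq)
    moreover have "g f = u"
    proof
      fix k show "g f k = u k" using u unfolding g_def f_def by (cases "k < N") (auto simp: PiE_def extensional_def)
    qed
    ultimately show "u \<in> g ` PiE {..<N} (\<lambda>k. Y k \<times> U k)" by blast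
  next
    fix u assume "u \<in> g ` PiE {..<N} (\<lambda>k. Y k \<times> U k)"
    then show "u \<in> PiE {..<N} U" unfolding g_def by (auto simp: PiE_def Pi_def mem_Times_iff)
  qed
  ultimately show "compact (PiE {..<N} U)"
    using compact_continuous_image[OF continuous_on_subset[OF _ subset_UNIV] cp] by simp
  fix n assume n: "n < N"
  have "continuous_on UNIV (\<lambda>f::nat \<Rightarrow> 'y \<times> 'u. snd (f n))"
    by (intro continuous_on_snd continuous_on_product_coordinates)
  moreover have "U n = (\<lambda>f. snd (f n)) ` PiE {..<N} (\<lambda>k. Y k \<times> U k)"
  proof (intro set_eqI iffI)
    fix x assume x: "x \<in> U n"
    define f where "f = restrict (\<lambda>k. (SOME y. y \<in> Y k, if k = n then x else SOME v. v \<in> U k)) {..<N}"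
    have "f \<in> PiE {..<N} (\<lambda>k. Y k \<times> U k)"
      unfolding f_def using x ne by (auto simp: some_in_eq)
    moreover have "snd (f n) = x" unfolding f_def using n by simp
    ultimately show "x \<in> (\<lambda>f. snd (f n)) ` PiE {..<N} (\<lambda>k. Y k \<times> U k)" by force
  next
    fix x assume "x \<in> (\<lambda>f. snd (f n)) ` PiE {..<N} (\<lambda>k. Y k \<times> U k)"
    then show "x \<in> U n" using n by (auto simp: PiE_def Pi_def mem_Times_iff)
  qed
  ultimately show "compact (U n)"
    using compact_continuous_image[OF continuous_on_subset[OF _ subset_UNIV] cp] by simp
qed



theorem mainTheorem5:
  fixes M :: "'o measure"
    and N :: nat
    and w0 :: "'o \<Rightarrow> 'w::polish_space"
    and eta :: "nat \<Rightarrow> 'o \<Rightarrow> (nat \<Rightarrow> 'u::polish_space) \<Rightarrow> 'y::polish_space"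
    and Y :: "nat \<Rightarrow> 'y set"
    and U :: "nat \<Rightarrow> 'u set"
    and c :: "'w \<Rightarrow> (nat \<Rightarrow> 'u) \<Rightarrow> real"
    and p :: "nat \<Rightarrow> 'w \<Rightarrow> (nat \<Rightarrow> 'u) \<Rightarrow> 'y measure"
  assumes P: "prob_space M"
    and N_pos: "0 < N"
    and w0_meas: "w0 \<in> measurable M borel"
    and U_ne: "\<forall>k<N. U k \<noteq> {}"
    \<comment> \<open>observations: measurable functions of (omega, u^0..u^(n-1)) with values in Y n\<close>
    and eta_meas: "\<forall>n<N. (\<lambda>(omega, u). eta n omega u)
         \<in> measurable (M \<Otimes>\<^sub>M (\<Pi>\<^sub>M k\<in>{..<n}. restrict_space borel (U k))) borel"
    and eta_Y: "\<forall>n<N. \<forall>omega\<in>space M. \<forall>u\<in>PiE {..<n} U. eta n omega u \<in> Y n"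
    \<comment> \<open>classical information structure: sigma(y^k) is contained in sigma(y^i) for k < i\<close>
    and classical: "\<forall>k i. k < i \<longrightarrow> i < N \<longrightarrow>
         (\<forall>B\<in>sets (borel :: 'y measure). \<exists>C\<in>sets (borel :: 'y measure).
            \<forall>omega\<in>space M. \<forall>u\<in>PiE {..<i} U.
              (eta k omega (restrict u {..<k}) \<in> B \<longleftrightarrow> eta i omega u \<in> C))"
    \<comment> \<open>sigma(omega_0) is contained in sigma(y^1)\<close>
    and w0_y1: "\<forall>A\<in>sets (borel :: 'w measure). \<exists>B\<in>sets (borel :: 'y measure).
         {omega \<in> space M. w0 omega \<in> A} = {omega \<in> space M. eta 0 omega (\<lambda>k. undefined) \<in> B}"
    \<comment> \<open>compactness of the product of the Y^k x U^k\<close>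
    and compact_prod: "compact (PiE {..<N} (\<lambda>k. Y k \<times> U k))"
    \<comment> \<open>cost: nonnegative, measurable, lower semicontinuous\<close>
    and c_nonneg: "\<forall>w. \<forall>u\<in>PiE {..<N} U. 0 \<le> c w u"
    and c_meas: "(\<lambda>(w, u). c w u)
         \<in> borel_measurable (borel \<Otimes>\<^sub>M (\<Pi>\<^sub>M k\<in>{..<N}. restrict_space borel (U k)))"
    and c_lsc: "lsc_on (UNIV \<times> PiE {..<N} U) (\<lambda>(w, u). c w u)"
    \<comment> \<open>p n is a kernel from Omega_0 x U^0 x ... x U^(n-1) to Y n\<close>
    and p_prob: "\<forall>n<N. \<forall>w. \<forall>u\<in>PiE {..<n} U.
         prob_space (p n w u) \<and> sets (p n w u) = sets borel \<and> measure (p n w u) (Y n) = 1"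
    \<comment> \<open>p n (. | omega_0, u) is the conditional law of eta n (omega, u) given omega_0\<close>
    and p_cond: "\<forall>n<N. \<forall>u\<in>PiE {..<n} U. \<forall>A\<in>sets (borel :: 'w measure). \<forall>B\<in>sets (borel :: 'y measure).
         measure M {omega \<in> space M. w0 omega \<in> A \<and> eta n omega u \<in> B}
           = (\<integral>omega. indicator A (w0 omega) * measure (p n (w0 omega) u) B \<partial>M)"
    \<comment> \<open>weak continuity of the kernels\<close>
    and p_weak_cont: "\<forall>n<N. \<forall>f :: 'y \<Rightarrow> real. continuous_on UNIV f \<and> bounded (range f) \<longrightarrow>
         continuous_on (UNIV \<times> PiE {..<n} U) (\<lambda>(w, u). \<integral>y. f y \<partial>(p n w u))"
  shows "\<exists>gamma\<in>team_policies N Y U.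
           team_cost M w0 eta c N gamma = (INF gamma'\<in>team_policies N Y U. team_cost M w0 eta c N gamma')"
proof -
  have spM: "space M \<noteq> {}" using P by (rule prob_space.not_empty)
  then obtain om0 where om0: "om0 \<in> space M" by blast
  have Une: "\<And>k. k < N \<Longrightarrow> U k \<noteq> {}" using U_ne by blast
  have PiE_ne: "PiE {..<n} U \<noteq> {}" if "n \<le> N" for n
    using Une that by (auto simp: PiE_eq_empty_iff)
  have Yne: "Y k \<noteq> {}" if k: "k < N" for k
  proof -
    obtain u where "u \<in> PiE {..<k} U" using PiE_ne[of k] k by auto
    then have "eta k om0 u \<in> Y k" using eta_Y k om0 by blast
    then show ?thesis by blast
  qed
  have ne: "\<And>k. k < N \<Longrightarrow> Y k \<noteq> {} \<and> U k \<noteq> {}" using Yne Une by blast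
  have cplK: "compact (PiE {..<N} U)"
    by (rule compact_proj_lemmas(1)[OF compact_prod]) (use ne in blast)
  have cplU: "compact (U n)" if "n < N" for n
    by (rule compact_proj_lemmas(2)[OF compact_prod _ that]) (use ne in blast)
  define K where "K = PiE {..<N} U"
  have Kc: "compact K" and Kne: "K \<noteq> {}" using cplK PiE_ne[of N] unfolding K_def by auto
  have lsc: "lsc_on (UNIV \<times> K) (\<lambda>(w, u). c w u)" using c_lsc unfolding K_def .
  obtain s where s_meas: "s \<in> borel_measurable borel"
    and sK: "\<And>w. s w \<in> K" and smin: "\<And>w y. y \<in> K \<Longrightarrow> c w (s w) \<le> c w y"
    using lsc_select[OF lsc Kc Kne] by blast
  have sn_meas: "(\<lambda>w. s w n) \<in> borel_measurable borel" for n
  proof -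
    have "(\<lambda>x::nat \<Rightarrow> 'u. x n) \<in> borel_measurable borel"
      by (rule borel_measurable_continuous_onI) simp
    then show ?thesis by (rule measurable_compose[OF s_meas])
  qed
  have recover: "\<exists>C\<in>sets (borel :: 'y measure). \<forall>omega\<in>space M. \<forall>u\<in>PiE {..<n} U.
      (w0 omega \<in> A \<longleftrightarrow> eta n omega u \<in> C)" if n: "n < N" and A: "A \<in> sets (borel :: 'w measure)" for n A
  proof -
    have "\<exists>B\<in>sets (borel :: 'y measure).
         {omega \<in> space M. w0 omega \<in> A} = {omega \<in> space M. eta 0 omega (\<lambda>k. undefined) \<in> B}"
      using w0_y1 A by (rule bspec)
    then obtain B0 where B0: "B0 \<in> sets (borel :: 'y measure)"
      "{omega \<in> space M. w0 omega \<in> A} = {omega \<in> space M. eta 0 omega (\<lambda>k. undefined) \<in> B0}"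
      by (elim bexE) (rule that)
    have B0': "w0 omega \<in> A \<longleftrightarrow> eta 0 omega (\<lambda>k. undefined) \<in> B0" if "omega \<in> space M" for omega
      using that B0(2)[THEN eqset_imp_iff, of omega] by simp
    show ?thesis
    proof (cases "n = 0")
      case True
      have "\<forall>omega\<in>space M. \<forall>u\<in>PiE {..<n} U. (w0 omega \<in> A \<longleftrightarrow> eta n omega u \<in> B0)"
      proof (intro ballI)
        fix omega u assume "omega \<in> space M" "u \<in> PiE {..<n} U"
        then have "u = (\<lambda>k. undefined)" using True by simp
        then show "w0 omega \<in> A \<longleftrightarrow> eta n omega u \<in> B0" using B0'[OF \<open>omega \<in> space M\<close>] True by simp
      qed
      then show ?thesis by (rule bexI[OF _ B0(1)])
    next
      case False
      then have "0 < n" by simp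
      have clas0: "\<forall>B\<in>sets (borel :: 'y measure). \<exists>C\<in>sets (borel :: 'y measure).
            \<forall>omega\<in>space M. \<forall>u\<in>PiE {..<n} U.
              (eta 0 omega (restrict u {..<0}) \<in> B \<longleftrightarrow> eta n omega u \<in> C)"
        using classical[THEN spec[of _ 0], THEN spec[of _ n], THEN mp, THEN mp, OF \<open>0 < n\<close> n] .
      obtain C where C: "C \<in> sets (borel :: 'y measure)" "\<forall>omega\<in>space M. \<forall>u\<in>PiE {..<n} U.
              (eta 0 omega (restrict u {..<0}) \<in> B0 \<longleftrightarrow> eta n omega u \<in> C)"
        using bspec[OF clas0 B0(1)] by (elim bexE) (rule that)
      have r0: "restrict u {..<0} = (\<lambda>k. undefined)" for u :: "nat \<Rightarrow> 'u"
        by (rule ext) simp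
      have "\<forall>omega\<in>space M. \<forall>u\<in>PiE {..<n} U. (w0 omega \<in> A \<longleftrightarrow> eta n omega u \<in> C)"
      proof (intro ballI)
        fix omega u assume om: "omega \<in> space M" and u: "u \<in> PiE {..<n} U"
        have "eta 0 omega (restrict u {..<0}) \<in> B0 \<longleftrightarrow> eta n omega u \<in> C" using C(2) om u by simp
        then show "w0 omega \<in> A \<longleftrightarrow> eta n omega u \<in> C" using B0'[OF om] unfolding r0 by simp
      qed
      then show ?thesis by (rule bexI[OF _ C(1)])
    qed
  qed
  have hex: "\<exists>h \<in> borel_measurable borel. \<forall>p\<in>space M \<times> PiE {..<n} U.
      h ((\<lambda>(omega, u). eta n omega u) p) = (\<lambda>(omega, u). s (w0 omega) n) p" if n: "n < N" for n
  proof (rule factor_lemma, intro ballI)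
    fix B :: "'u set" assume B: "B \<in> sets borel"
    have A: "(\<lambda>w. s w n) -` B \<in> sets (borel :: 'w measure)"
      using measurable_sets[OF sn_meas B] by simp
    obtain C where C: "C \<in> sets (borel :: 'y measure)" "\<forall>omega\<in>space M. \<forall>u\<in>PiE {..<n} U.
        (w0 omega \<in> (\<lambda>w. s w n) -` B \<longleftrightarrow> eta n omega u \<in> C)"
      using recover[OF n A] by blast
    show "\<exists>C\<in>sets borel. \<forall>p\<in>space M \<times> PiE {..<n} U.
        ((\<lambda>(omega, u). s (w0 omega) n) p \<in> B) = ((\<lambda>(omega, u). eta n omega u) p \<in> C)"
      using C by auto
  qed
  define hh where "hh n = (SOME h. h \<in> borel_measurable borel \<and> (\<forall>p\<in>space M \<times> PiE {..<n} U.
      h ((\<lambda>(omega, u). eta n omega u) p) = (\<lambda>(omega, u). s (w0 omega) n) p))" for n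
  have hh: "hh n \<in> borel_measurable borel \<and> (\<forall>p\<in>space M \<times> PiE {..<n} U.
      hh n ((\<lambda>(omega, u). eta n omega u) p) = (\<lambda>(omega, u). s (w0 omega) n) p)" if "n < N" for n
    using hex[OF that] unfolding hh_def by (rule someI2_bex) blast
  have hh_meas: "hh n \<in> borel_measurable borel" if "n < N" for n using hh[OF that] by blast
  have hh_eq: "hh n (eta n omega u) = s (w0 omega) n"
    if "n < N" "omega \<in> space M" "u \<in> PiE {..<n} U" for n omega u
    using hh[OF that(1)] that(2,3) by auto
  define gamma where "gamma n y = (if hh n y \<in> U n then hh n y else (SOME x. x \<in> U n))" for n y
  have gU: "gamma n y \<in> U n" if "n < N" for n y
    unfolding gamma_def using Une[OF that] by (auto simp: some_in_eq)
  have g_pol: "gamma \<in> team_policies N Y U"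
    unfolding team_policies_def
  proof (intro CollectI allI impI conjI ballI)
    fix n assume n: "n < N"
    have Ub: "U n \<in> sets borel" using cplU[OF n] by (simp add: compact_imp_closed)
    have "gamma n \<in> borel_measurable borel"
      unfolding gamma_def
    proof (rule measurable_If)
      show "hh n \<in> borel_measurable borel" by (rule hh_meas[OF n])
      show "(\<lambda>y. SOME x. x \<in> U n) \<in> borel_measurable borel" by simp
      show "{y \<in> space borel. hh n y \<in> U n} \<in> sets borel"
        using measurable_sets[OF hh_meas[OF n] Ub] by (simp add: vimage_def)
    qed
    then show "gamma n \<in> restrict_space borel (Y n) \<rightarrow>\<^sub>M borel" by (rule measurable_restrict_space1)
  next
    fix n y assume "n < N" "y \<in> Y n" then show "gamma n y \<in> U n" using gU by blast
  qed
  have acts_g: "acts eta gamma omega n = restrict (s (w0 omega)) {..<n}"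
    if "omega \<in> space M" "n \<le> N" for omega n
    using that(2)
  proof (induction n)
    case 0 then show ?case by (auto simp: fun_eq_iff)
  next
    case (Suc n)
    then have n: "n < N" by simp
    have IH: "acts eta gamma omega n = restrict (s (w0 omega)) {..<n}" by (rule Suc.IH) (use Suc.prems in simp)
    have mem: "restrict (s (w0 omega)) {..<n} \<in> PiE {..<n} U"
      using sK[of "w0 omega"] n unfolding K_def by (auto simp: PiE_def Pi_def)
    have "hh n (eta n omega (restrict (s (w0 omega)) {..<n})) = s (w0 omega) n"
      by (rule hh_eq[OF n that(1) mem])
    moreover have "s (w0 omega) n \<in> U n" using sK[of "w0 omega"] n unfolding K_def by (auto simp: PiE_def Pi_def)
    ultimately have "gamma n (eta n omega (restrict (s (w0 omega)) {..<n})) = s (w0 omega) n"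
      unfolding gamma_def by simp
    then show ?case unfolding acts.simps IH by (auto simp: fun_eq_iff)
  qed
  have acts_gN: "acts eta gamma omega N = s (w0 omega)" if "omega \<in> space M" for omega
  proof -
    have "s (w0 omega) \<in> extensional {..<N}" using sK[of "w0 omega"] unfolding K_def by (simp add: PiE_def)
    then show ?thesis using acts_g[OF that order_refl] by (simp add: extensional_restrict)
  qed
  have acts_any: "acts eta g omega n \<in> PiE {..<n} U"
    if g: "g \<in> team_policies N Y U" and om: "omega \<in> space M" and "n \<le> N" for g omega n
    using that(3)
  proof (induction n)
    case 0 then show ?case by (simp add: fun_eq_iff)
  next
    case (Suc n)
    then have n: "n < N" by simp
    have IH: "acts eta g omega n \<in> PiE {..<n} U" using Suc by simp
    have "eta n omega (acts eta g omega n) \<in> Y n" using eta_Y n om IH by blast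
    then have "g n (eta n omega (acts eta g omega n)) \<in> U n" using g n unfolding team_policies_def by blast
    then have "(acts eta g omega n)(n := g n (eta n omega (acts eta g omega n))) \<in> PiE (insert n {..<n}) U"
      by (rule PiE_fun_upd[OF _ IH])
    then show ?case by (simp only: acts.simps lessThan_Suc)
  qed
  have le: "team_cost M w0 eta c N gamma \<le> team_cost M w0 eta c N g" if g: "g \<in> team_policies N Y U" for g
    unfolding team_cost_def
  proof (rule nn_integral_mono)
    fix omega assume om: "omega \<in> space M"
    have "acts eta g omega N \<in> K" using acts_any[OF g om order_refl] unfolding K_def .
    then have "c (w0 omega) (s (w0 omega)) \<le> c (w0 omega) (acts eta g omega N)" by (rule smin)
    then show "ennreal (c (w0 omega) (acts eta gamma omega N)) \<le> ennreal (c (w0 omega) (acts eta g omega N))"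
      using acts_gN[OF om] by (simp add: ennreal_leI)
  qed
  have "team_cost M w0 eta c N gamma = (INF gamma'\<in>team_policies N Y U. team_cost M w0 eta c N gamma')"
  proof (rule antisym)
    show "team_cost M w0 eta c N gamma \<le> (INF gamma'\<in>team_policies N Y U. team_cost M w0 eta c N gamma')"
      by (rule INF_greatest) (rule le)
    show "(INF gamma'\<in>team_policies N Y U. team_cost M w0 eta c N gamma') \<le> team_cost M w0 eta c N gamma"
      by (rule INF_lower[OF g_pol])
  qed
  then show ?thesis using g_pol by blast
qed

end
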